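(* There exists a connected graphon $W$ with $h_W=0$. Moreover $W$ can be chosen $\{0,1\}$-valued such that $W^{-1}(1)$ contains an open subset of $(0,1)^2$ containing the diagonal $\{(x,x):0<x<1\}$.
   Context: Let $I=[0,1]$ with Lebesgue measure $\mu_L$. A graphon is a measurable function $W:I^2\to I$ with $W(x,y)=W(y,x)$. For measurable $A,B\subseteq I$ put $e_W(A,B)=\int_{A\times B}W$ and $\mathrm{vol}_W(A)=e_W(A,I)$. $W$ is connected if $e_W(A,A^c)\neq0$ for every measurable $A$ with $0<\mu_L(A)<1$. The Cheeger constant is $h_W=\inf_{A:\,0<\mu_L(A)<1}\frac{e_W(A,A^c)}{\min\{\mathrm{vol}_W(A),\mathrm{vol}_W(A^c)\}}$. *)

theory Defs
  imports "HOL-Analysis.Analysis"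
begin

text \<open>A graphon is represented by a
  curried function W :: real => real => real; only its values on I x I matter.\<close>

definition unit_I :: "real set" where
  "unit_I = {0..1}"

definition graphon :: "(real \<Rightarrow> real \<Rightarrow> real) \<Rightarrow> bool" where
  "graphon W \<longleftrightarrow>
     (\<lambda>p. W (fst p) (snd p)) \<in> borel_measurable (restrict_space (lebesgue \<Otimes>\<^sub>M lebesgue) (unit_I \<times> unit_I))
   \<and> (\<forall>x\<in>unit_I. \<forall>y\<in>unit_I. W x y \<in> unit_I \<and> W x y = W y x)"

definition graphon_e :: "(real \<Rightarrow> real \<Rightarrow> real) \<Rightarrow> real set \<Rightarrow> real set \<Rightarrow> real" where
  "graphon_e W A B = (LINT p : A \<times> B | (lebesgue \<Otimes>\<^sub>M lebesgue). W (fst p) (snd p))"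

definition graphon_vol :: "(real \<Rightarrow> real \<Rightarrow> real) \<Rightarrow> real set \<Rightarrow> real" where
  "graphon_vol W A = graphon_e W A unit_I"

definition proper_subset_I :: "real set \<Rightarrow> bool" where
  "proper_subset_I A \<longleftrightarrow> A \<in> sets lebesgue \<and> A \<subseteq> unit_I
      \<and> 0 < measure lebesgue A \<and> measure lebesgue A < 1"

definition graphon_connected :: "(real \<Rightarrow> real \<Rightarrow> real) \<Rightarrow> bool" where
  "graphon_connected W \<longleftrightarrow>
     (\<forall>A. proper_subset_I A \<longrightarrow> graphon_e W A (unit_I - A) \<noteq> 0)"

definition cheeger :: "(real \<Rightarrow> real \<Rightarrow> real) \<Rightarrow> real" where
  "cheeger W = Inf {graphon_e W A (unit_I - A) /
        min (graphon_vol W A) (graphon_vol W (unit_I - A)) | A. proper_subset_I A}"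

end

theory Submission imports Defs begin

lemma sf_leb: "sigma_finite_measure (lebesgue :: real measure)"
proof (rule sigma_finite_measure.intro)
  define C where "C = range (\<lambda>n::nat. {- (real n) .. real n})"
  have u: "\<Union> C = space lebesgue"
  proof (rule set_eqI)
    fix x :: real
    obtain n :: nat where n: "\<bar>x\<bar> \<le> real n" using real_arch_simple by blast
    have "- real n \<le> x" "x \<le> real n" using n by linarith+
    then have "x \<in> {- (real n) .. real n}" by simp
    then have "x \<in> \<Union> C" unfolding C_def by (rule UN_I[OF UNIV_I])
    then show "x \<in> \<Union> C \<longleftrightarrow> x \<in> space lebesgue" by simp
  qed
  have c: "countable C" unfolding C_def by simp
  have s: "C \<subseteq> sets lebesgue" unfolding C_def by (simp add: image_subset_iff)
  have e: "\<forall>a\<in>C. emeasure lebesgue a \<noteq> \<infinity>" unfolding C_def by simp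
  show "\<exists>A. countable A \<and> A \<subseteq> sets (lebesgue::real measure) \<and> \<Union> A = space (lebesgue::real measure) \<and> (\<forall>a\<in>A. emeasure lebesgue a \<noteq> \<infinity>)"
    apply (rule exI[of _ C]) using u c s e by (intro conjI)
qed

abbreviation "MM \<equiv> (lebesgue::real measure) \<Otimes>\<^sub>M (lebesgue::real measure)"

lemma emb_pair: "emeasure MM (A \<times> B) = emeasure lebesgue A * emeasure lebesgue B"
  if "A \<in> sets lebesgue" "B \<in> sets lebesgue" for A B :: "real set"
  using sigma_finite_measure.emeasure_pair_measure_Times[OF sf_leb that] .

lemma mb_pair: "measure MM (A \<times> B) = measure lebesgue A * measure lebesgue B"
  if "A \<in> sets lebesgue" "B \<in> sets lebesgue" for A B :: "real set"
  using emb_pair[OF that] by (simp add: measure_def enn2real_mult)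

definition J :: "nat \<Rightarrow> real set" where
  "J n = {(1/2)^(Suc n) <..< (1/2)^n + (1/4)^(Suc n)}"

definition S :: "(real \<times> real) set" where "S = (\<Union>n. J n \<times> J n)"

definition Wg :: "real \<Rightarrow> real \<Rightarrow> real" where "Wg x y = indicator S (x, y)"

lemma J_sets[simp]: "J n \<in> sets lebesgue" unfolding J_def by simp

lemma S_sets: "S \<in> sets MM"
  unfolding S_def by (intro sets.countable_UN) auto

lemma open_S: "open S" unfolding S_def J_def by (intro open_UN ballI open_Times) auto

lemma I_sets[simp]: "unit_I \<in> sets lebesgue" unfolding unit_I_def by simp

lemma II_fm: "unit_I \<times> unit_I \<in> fmeasurable MM"
  unfolding fmeasurable_def using emb_pair[OF I_sets I_sets]
  by (auto simp: unit_I_def ennreal_mult_less_top)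

lemma I_fm: "unit_I \<in> fmeasurable lebesgue"
  unfolding fmeasurable_def unit_I_def by simp

lemma e_eq: "graphon_e Wg A B = measure MM ((A \<times> B) \<inter> S)"
proof -
  have "(\<lambda>p. indicator (A \<times> B) p *\<^sub>R Wg (fst p) (snd p)) = indicator ((A \<times> B) \<inter> S)"
    by (auto simp: indicator_def Wg_def fun_eq_iff)
  then show ?thesis unfolding graphon_e_def set_lebesgue_integral_def
    by (simp add: space_pair_measure)
qed

lemma cover: "0 < x \<Longrightarrow> x \<le> 1 \<Longrightarrow> \<exists>n. x \<in> J n"
proof -
  assume x: "0 < x" "x \<le> 1"
  obtain n where n: "(1/2::real)^n < x" using real_arch_pow_inv[OF x(1), of "1/2"] by auto
  define m where "m = (LEAST n. (1/2::real)^Suc n < x)"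
  have "(1/2::real)^Suc n < (1/2)^n" by simp
  then have ex: "(1/2::real)^Suc n < x" using n by linarith
  have m1: "(1/2::real)^Suc m < x" unfolding m_def by (rule LeastI[of _ n], rule ex)
  show ?thesis
  proof (cases m)
    case 0
    then show ?thesis using m1 x by (auto simp: J_def intro!: exI[of _ 0])
  next
    case (Suc k)
    have "\<not> (1/2::real)^Suc k < x" using Suc unfolding m_def
      by (metis Suc m_def lessI not_less_Least)
    then have "x \<le> (1/2)^m" using Suc by simp
    moreover have "(0::real) < (1/4)^Suc m" by simp
    ultimately have "x < (1/2)^m + (1/4)^Suc m" by linarith
    then have "x \<in> J m" using m1 unfolding J_def greaterThanLessThan_iff by blast
    then show ?thesis by blast
  qed
qed



lemma graphon_Wg: "graphon Wg"
proof -
  have f: "(\<lambda>p. Wg (fst p) (snd p)) = indicator S" by (auto simp: Wg_def fun_eq_iff)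
  have sym: "(x, y) \<in> S \<longleftrightarrow> (y, x) \<in> S" for x y unfolding S_def by auto
  show ?thesis unfolding graphon_def f
    using measurable_restrict_space1[OF borel_measurable_indicator[OF S_sets]]
    by (auto simp: Wg_def unit_I_def indicator_def sym)
qed

lemma fm_I: "A \<subseteq> unit_I \<Longrightarrow> A \<in> sets lebesgue \<Longrightarrow> A \<in> fmeasurable lebesgue"
  using fmeasurableI2[OF I_fm] by blast

lemma fm_times: "C \<in> fmeasurable lebesgue \<Longrightarrow> D \<in> fmeasurable lebesgue \<Longrightarrow> C \<times> D \<in> fmeasurable MM"
  unfolding fmeasurable_def using emb_pair
  by (auto simp: ennreal_mult_less_top)

lemma ABS_fm: assumes "A \<subseteq> unit_I" "B \<subseteq> unit_I" "A \<in> sets lebesgue" "B \<in> sets lebesgue"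
  shows "(A \<times> B) \<inter> S \<in> fmeasurable MM"
proof (rule fmeasurableI2[OF II_fm])
  show "A \<times> B \<inter> S \<subseteq> unit_I \<times> unit_I" using assms by auto
  show "A \<times> B \<inter> S \<in> sets MM" using sets.Int[OF pair_measureI[OF assms(3,4)] S_sets] .
qed

lemma rect_le:
  assumes "A \<subseteq> unit_I" "B \<subseteq> unit_I" "A \<in> sets lebesgue" "B \<in> sets lebesgue"
    "C \<in> sets lebesgue" "D \<in> sets lebesgue" "C \<times> D \<subseteq> (A \<times> B) \<inter> S"
  shows "measure lebesgue C * measure lebesgue D \<le> graphon_e Wg A B"
  unfolding e_eq mb_pair[OF assms(5,6), symmetric]
  by (rule measure_mono_fmeasurable[OF assms(7)]) (auto intro!: ABS_fm assms pair_measureI)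

lemma rect_ge:
  assumes "A \<subseteq> unit_I" "B \<subseteq> unit_I" "A \<in> sets lebesgue" "B \<in> sets lebesgue"
    "C \<in> fmeasurable lebesgue" "D \<in> fmeasurable lebesgue" "(A \<times> B) \<inter> S \<subseteq> C \<times> D"
  shows "graphon_e Wg A B \<le> measure lebesgue C * measure lebesgue D"
  unfolding e_eq mb_pair[OF fmeasurableD[OF assms(5)] fmeasurableD[OF assms(6)], symmetric]
  by (rule measure_mono_fmeasurable[OF assms(7) fmeasurableD[OF ABS_fm[OF assms(1-4)]] fm_times[OF assms(5,6)]])

lemma e_nonneg: "0 \<le> graphon_e Wg A B" unfolding e_eq by simp

lemma null0: "{0::real} \<in> null_sets lebesgue"
proof -
  have "{0::real} = {0..0}" by simp
  then show ?thesis by (simp add: null_sets_def)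
qed

lemma chain:
  assumes X: "X \<in> sets lebesgue" "X \<subseteq> unit_I" and Y: "Y = unit_I - X"
    and h: "\<And>n. measure lebesgue (X \<inter> J n) * measure lebesgue (Y \<inter> J n) = 0"
    and h0: "measure lebesgue (Y \<inter> J 0) = 0"
  shows "measure lebesgue Y = 0"
proof -
  have Ys: "Y \<in> sets lebesgue" "Y \<subseteq> unit_I" using X Y by auto
  have Yn: "measure lebesgue (Y \<inter> J n) = 0" for n
  proof (induction n)
    case 0
    then show ?case using h0 .
  next
    case (Suc n)
    define a :: real where "a = (1/2)^Suc n"
    define b :: real where "b = (1/4)^Suc (Suc n)"
    define K where "K = {a <..< a + b}"
    have a0: "0 \<le> a" "a \<le> (1/2)^n" "a \<le> 1/2" unfolding a_def
      by (auto simp: power_le_one)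
    have "(1/4::real)^n \<le> 1" by (simp add: power_le_one)
    then have b0: "0 < b" "b \<le> (1/4)^Suc n" "b \<le> 1/4" unfolding b_def
      by auto
    have c: "(1/2::real)^Suc (Suc n) \<le> a" unfolding a_def by simp
    have J1: "J n = {a <..< (1/2)^n + (1/4)^Suc n}" unfolding J_def a_def ..
    have J2: "J (Suc n) = {(1/2)^Suc (Suc n) <..< a + b}" unfolding J_def a_def b_def ..
    have KJ: "K \<subseteq> J n" "K \<subseteq> J (Suc n)" "K \<subseteq> unit_I"
      unfolding J1 J2 K_def unit_I_def using a0 b0 c by auto
    have Ksets: "K \<in> sets lebesgue" unfolding K_def by simp
    have mK: "measure lebesgue K = b" unfolding K_def using b0 by simp
    have KU: "K = (X \<inter> K) \<union> (Y \<inter> K)" using KJ Y by auto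
    have fX: "X \<inter> K \<in> fmeasurable lebesgue" using X Ksets by (intro fm_I) auto
    have fY: "Y \<inter> K \<in> fmeasurable lebesgue" using Ys Ksets by (intro fm_I) auto
    have dj: "\<And>x. x \<notin> X \<inter> K \<or> x \<notin> Y \<inter> K" using Y by blast
    have "measure lebesgue K = measure lebesgue ((X \<inter> K) \<union> (Y \<inter> K))"
      using KU by (rule arg_cong)
    also have "\<dots> = measure lebesgue (X \<inter> K) + measure lebesgue (Y \<inter> K)"
      by (rule measure_Un_AE[OF AE_I2[OF dj] fX fY])
    finally have "measure lebesgue K = measure lebesgue (X \<inter> K) + measure lebesgue (Y \<inter> K)" .
    moreover have "measure lebesgue (Y \<inter> K) \<le> measure lebesgue (Y \<inter> J n)"
      using KJ Ys Ksets by (intro measure_mono_fmeasurable fm_I) auto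
    moreover have "measure lebesgue (X \<inter> K) \<le> measure lebesgue (X \<inter> J (Suc n))"
      using KJ X Ksets by (intro measure_mono_fmeasurable fm_I) auto
    ultimately have "0 < measure lebesgue (X \<inter> J (Suc n))"
      using Suc.IH mK b0 measure_nonneg[of lebesgue "Y \<inter> K"] by linarith
    then show ?case using h[of "Suc n"] by simp
  qed
  have null: "Y \<inter> J n \<in> null_sets lebesgue" for n
  proof -
    have "Y \<inter> J n \<in> fmeasurable lebesgue" using Ys by (intro fm_I) auto
    then show ?thesis using Yn[of n] by (simp add: null_sets_def emeasure_eq_measure2)
  qed
  have "Y \<subseteq> {0} \<union> (\<Union>n. Y \<inter> J n)"
  proof
    fix y assume y: "y \<in> Y"
    show "y \<in> {0} \<union> (\<Union>n. Y \<inter> J n)"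
    proof (cases "y = 0")
      case False
      then have "0 < y" "y \<le> 1" using y Ys by (auto simp: unit_I_def)
      then obtain n where "y \<in> J n" using cover by blast
      then show ?thesis using y by blast
    qed simp
  qed
  moreover have "(\<Union>n. Y \<inter> J n) \<in> null_sets lebesgue" by (rule null_sets_UN) (rule null)
  then have "{0} \<union> (\<Union>n. Y \<inter> J n) \<in> null_sets lebesgue"
    using null_sets.Un[OF null0] by blast
  ultimately have "Y \<in> null_sets lebesgue" using Ys null_sets_subset by blast
  then show ?thesis by (rule measure_eq_0_null_sets)
qed

lemma mu_compl: "A \<in> sets lebesgue \<Longrightarrow> A \<subseteq> unit_I \<Longrightarrow> measure lebesgue (unit_I - A) = 1 - measure lebesgue A"
  using measurable_measure_Diff[OF I_fm] by (simp add: unit_I_def)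

lemma connected_Wg: "graphon_connected Wg"
  unfolding graphon_connected_def
proof (intro allI impI notI)
  fix A assume pA: "proper_subset_I A" and e0: "graphon_e Wg A (unit_I - A) = 0"
  define B where "B = unit_I - A"
  have A: "A \<in> sets lebesgue" "A \<subseteq> unit_I" "0 < measure lebesgue A" "measure lebesgue A < 1"
    using pA unfolding proper_subset_I_def by auto
  have B: "B \<in> sets lebesgue" "B \<subseteq> unit_I" using A unfolding B_def by auto
  have h: "measure lebesgue (A \<inter> J n) * measure lebesgue (B \<inter> J n) = 0" for n
  proof -
    have "measure lebesgue (A \<inter> J n) * measure lebesgue (B \<inter> J n) \<le> graphon_e Wg A B"
      using A B by (intro rect_le) (auto simp: S_def)
    moreover have "graphon_e Wg A B = 0" using e0 B_def by simp
    moreover have "0 \<le> measure lebesgue (A \<inter> J n) * measure lebesgue (B \<inter> J n)" by simp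
    ultimately show ?thesis by linarith
  qed
  show False
  proof (cases "measure lebesgue (B \<inter> J 0) = 0")
    case True
    have "measure lebesgue B = 0" using chain[OF A(1,2) B_def h True] .
    then show False using mu_compl[OF A(1,2)] A B_def by simp
  next
    case False
    then have h0: "measure lebesgue (A \<inter> J 0) = 0" using h[of 0] by simp
    have AB: "A = unit_I - B" using A B_def by auto
    have "measure lebesgue A = 0"
      using chain[OF B(1,2) AB _ h0] h by (simp add: mult.commute)
    then show False using A by simp
  qed
qed


lemma fm_ivl1: "{a..b::real} \<in> fmeasurable lebesgue" unfolding fmeasurable_def by (cases "a \<le> b") auto
lemma fm_ivl2: "{a<..<b::real} \<in> fmeasurable lebesgue" unfolding fmeasurable_def by (cases "a \<le> b") auto

lemma ratio_small:
  assumes n: "1 \<le> n"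
  shows "\<exists>A. proper_subset_I A \<and>
    graphon_e Wg A (unit_I - A) / min (graphon_vol Wg A) (graphon_vol Wg (unit_I - A)) \<le> (1/2)^n"
proof -
  define t :: real where "t = (1/2)^n"
  define \<epsilon> :: real where "\<epsilon> = (1/4)^Suc n"
  define A where "A = {0..t}"
  have t0: "0 < t" unfolding t_def by simp
  have "(1/2::real)^n \<le> (1/2)^1" using n by (intro power_decreasing) auto
  then have th: "t \<le> 1/2" unfolding t_def by simp
  have e0: "0 < \<epsilon>" unfolding \<epsilon>_def by simp
  have As: "A \<in> sets lebesgue" "A \<subseteq> unit_I" unfolding A_def unit_I_def using th by auto
  have mA: "measure lebesgue A = t" unfolding A_def using t0 by simp
  have pA: "proper_subset_I A" unfolding proper_subset_I_def using As mA t0 th by auto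
  define B where "B = unit_I - A"
  have Bs: "B \<in> sets lebesgue" "B \<subseteq> unit_I" using As unfolding B_def by auto
  have Beq: "B = {t<..1}" unfolding B_def A_def unit_I_def using t0 by auto
  have sub: "(A \<times> B) \<inter> S \<subseteq> {0..t} \<times> {t<..<t + \<epsilon>}"
  proof
    fix p assume p: "p \<in> (A \<times> B) \<inter> S"
    obtain x y where pxy: "p = (x, y)" by (cases p)
    obtain k where k: "x \<in> J k" "y \<in> J k" using p pxy unfolding S_def by auto
    have x: "0 \<le> x" "x \<le> t" and y: "t < y" using p pxy unfolding A_def Beq by auto
    have xk: "(1/2)^Suc k < x" and yk: "y < (1/2)^k + (1/4)^Suc k" using k unfolding J_def by auto
    have "n \<le> k"
    proof (rule ccontr)
      assume "\<not> n \<le> k"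
      then have "Suc k \<le> n" by simp
      then have "(1/2::real)^n \<le> (1/2)^Suc k" by (intro power_decreasing) auto
      then show False using xk x unfolding t_def by linarith
    qed
    then have "(1/2::real)^k \<le> (1/2)^n" "(1/4::real)^Suc k \<le> (1/4)^Suc n"
      by (auto intro!: power_decreasing)
    then have "y < t + \<epsilon>" using yk unfolding t_def \<epsilon>_def by linarith
    then show "p \<in> {0..t} \<times> {t<..<t + \<epsilon>}" using x y pxy by auto
  qed
  have eup: "graphon_e Wg A B \<le> t * \<epsilon>"
    using rect_ge[OF As(2) Bs(2) As(1) Bs(1) fm_ivl1 fm_ivl2 sub] t0 e0 by simp
  define C where "C = {(1/2::real)^Suc n <..< t}"
  have h2: "(1/2::real)^Suc n = t / 2" unfolding t_def by simp
  have JnC: "J n = {(1/2)^Suc n <..< t + \<epsilon>}" unfolding J_def t_def \<epsilon>_def ..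
  have CA: "C \<subseteq> A" "C \<subseteq> unit_I" "C \<subseteq> J n" unfolding C_def A_def unit_I_def JnC h2
    using t0 th e0 by auto
  have "C \<times> C \<subseteq> (A \<times> unit_I) \<inter> S" using CA unfolding S_def by blast
  then have "measure lebesgue C * measure lebesgue C \<le> graphon_e Wg A unit_I"
    by (intro rect_le As) (auto simp: C_def)
  moreover have "measure lebesgue C = t / 2" unfolding C_def h2 using t0 by simp
  moreover have "(t/2) * (t/2) = \<epsilon>"
  proof -
    have "(1/2::real)^Suc n * (1/2)^Suc n = (1/2 * (1/2))^Suc n" by (rule power_mult_distrib[symmetric])
    then show ?thesis unfolding h2[symmetric] \<epsilon>_def by simp
  qed
  ultimately have vA: "\<epsilon> \<le> graphon_vol Wg A" unfolding graphon_vol_def by simp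
  define D where "D = {(1/2::real) <..< 1}"
  have DB: "D \<subseteq> B" "D \<subseteq> unit_I" "D \<subseteq> J 0" unfolding D_def Beq unit_I_def J_def using th by auto
  have "D \<times> D \<subseteq> (B \<times> unit_I) \<inter> S" using DB unfolding S_def by blast
  then have "measure lebesgue D * measure lebesgue D \<le> graphon_e Wg B unit_I"
    by (intro rect_le Bs) (auto simp: D_def)
  moreover have "measure lebesgue D = 1/2" unfolding D_def by simp
  moreover have "\<epsilon> \<le> 1/4" unfolding \<epsilon>_def
  proof -
    have "(1/4::real)^n \<le> 1" by (simp add: power_le_one)
    then show "(1/4::real)^Suc n \<le> 1/4" by simp
  qed
  ultimately have vB: "\<epsilon> \<le> graphon_vol Wg B" unfolding graphon_vol_def by simp
  have mn: "\<epsilon> \<le> min (graphon_vol Wg A) (graphon_vol Wg B)" using vA vB by simp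
  have "graphon_e Wg A B / min (graphon_vol Wg A) (graphon_vol Wg B) \<le> (t * \<epsilon>) / \<epsilon>"
    by (rule frac_le[OF _ eup e0 mn]) (use t0 e0 in simp)
  also have "\<dots> = t" using e0 by simp
  finally show ?thesis using pA unfolding B_def t_def by blast
qed

lemma cheeger_Wg: "cheeger Wg = 0"
proof -
  define V where "V = {graphon_e Wg A (unit_I - A) /
        min (graphon_vol Wg A) (graphon_vol Wg (unit_I - A)) | A. proper_subset_I A}"
  have nn: "0 \<le> v" if "v \<in> V" for v
    using that unfolding V_def graphon_vol_def by (auto intro!: divide_nonneg_nonneg e_nonneg)
  have ne: "V \<noteq> {}" using ratio_small[of 1] unfolding V_def by auto
  have bdd: "bdd_below V" by (intro bdd_belowI[where m=0]) (rule nn)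
  have ge: "0 \<le> Inf V" using nn ne by (intro cInf_greatest) auto
  have le: "Inf V \<le> 0"
  proof (rule ccontr)
    assume "\<not> Inf V \<le> 0"
    then have pos: "0 < Inf V" by simp
    obtain n where n: "(1/2::real)^n < Inf V" using real_arch_pow_inv[OF pos, of "1/2"] by auto
    have h: "(1/2::real)^Suc n \<le> (1/2)^n" by simp
    obtain A where A: "proper_subset_I A"
      "graphon_e Wg A (unit_I - A) / min (graphon_vol Wg A) (graphon_vol Wg (unit_I - A)) \<le> (1/2)^Suc n"
      using ratio_small[of "Suc n"] by auto
    have A2: "graphon_e Wg A (unit_I - A) / min (graphon_vol Wg A) (graphon_vol Wg (unit_I - A)) < Inf V"
      using A(2) h n by linarith
    have "Inf V \<le> graphon_e Wg A (unit_I - A) / min (graphon_vol Wg A) (graphon_vol Wg (unit_I - A))"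
      using A(1) bdd unfolding V_def by (intro cInf_lower) auto
    then show False using A2 by simp
  qed
  show ?thesis unfolding cheeger_def using ge le V_def by simp
qed

theorem mainTheorem18:
  shows "\<exists>W. graphon W \<and> graphon_connected W \<and> cheeger W = 0
    \<and> (\<forall>x\<in>unit_I. \<forall>y\<in>unit_I. W x y \<in> {0, 1})
    \<and> (\<exists>U. open U \<and> U \<subseteq> {0<..<1} \<times> {0<..<1}
          \<and> {(x, x) | x::real. 0 < x \<and> x < 1} \<subseteq> U
          \<and> (\<forall>(x, y)\<in>U. W x y = 1))"
proof (intro exI[of _ Wg] conjI)
  show "graphon Wg" by (rule graphon_Wg)
  show "graphon_connected Wg" by (rule connected_Wg)
  show "cheeger Wg = 0" by (rule cheeger_Wg)
  show "\<forall>x\<in>unit_I. \<forall>y\<in>unit_I. Wg x y \<in> {0, 1}" by (simp add: Wg_def indicator_def)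
  define U where "U = S \<inter> ({0<..<1} \<times> {0<..<1::real})"
  have "open U" unfolding U_def by (intro open_Int open_S open_Times) auto
  moreover have "U \<subseteq> {0<..<1} \<times> {0<..<1}" unfolding U_def by auto
  moreover have "{(x, x) | x::real. 0 < x \<and> x < 1} \<subseteq> U"
  proof
    fix p assume "p \<in> {(x, x) | x::real. 0 < x \<and> x < 1}"
    then obtain x where x: "p = (x, x)" "0 < x" "x < 1" by auto
    then obtain n where "x \<in> J n" using cover[of x] by auto
    then show "p \<in> U" using x unfolding U_def S_def by auto
  qed
  moreover have "\<forall>(x, y)\<in>U. Wg x y = 1" unfolding U_def Wg_def by auto
  ultimately show "\<exists>U. open U \<and> U \<subseteq> {0<..<1} \<times> {0<..<1}
          \<and> {(x, x) | x::real. 0 < x \<and> x < 1} \<subseteq> U \<and> (\<forall>(x, y)\<in>U. Wg x y = 1)" by blast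
qed

end
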